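(* Let $\Gamma$ be a metric graph and let $D$ be a vertex-supported effective divisor on $\Gamma$ with $d=\deg(D)$. Then the dimension of the cell complex $|D|$ is at most $d$. In addition, if $\Gamma$ is $2$-connected, then the dimension of the cell complex $|D|$ is at most $d-1$.
   Context: A metric graph $\Gamma=(V,E)$ is a connected undirected graph (loops and parallel edges allowed) whose edges have positive real lengths $M_e$; each edge is viewed as a real segment. A divisor is a finite formal $\mathbb{Z}$-combination $D=\sum_{x\in\Gamma}D(x)\cdot x$ of points of $\Gamma$; it is effective if all $D(x)\ge 0$, its degree is $\sum_x D(x)$, its support is $\{x: D(x)\neq 0\}$, and it is vertex-supported if its support is contained in $V$. A rational function is a continuous $f:\Gamma\to\mathbb{R}$, piecewise linear on each edge with finitely many pieces and integer slopes; $\mathrm{ord}_x(f)$ is the sum of the outgoing slopes of $f$ at $x$ over all directions at $x$, and $(f)=\sum_x \mathrm{ord}_x(f)\cdot x$. $R(D)$ is the set of rational functions $f$ with $D+(f)$ effective, and the linear system is $|D|=\{D+(f): f\in R(D)\}$. Cell structure of $|D|$: identify each open edge $e$ with $(0,M_e)$ (fixing an orientation). A cell is specified by data: a nonnegative integer $d_v$ for each $v\in V$; for some edges $e$ an ordered partition $d_e=\sum_{i=1}^{r_e}d_e^i$ into positive integers; and an integer $m_e$ for each $e\in E$. A divisor $L\in|D|$ lies in this cell iff $L(v)=d_v$ for all $v\in V$; on each edge $e$ with a partition, $L$ restricted to the interior of $e$ equals $\sum_{i=1}^{r_e}d_e^i x_i$ with $0<x_1<\dots<x_{r_e}<M_e$,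 while on other edges $L$ vanishes at all interior points; and for any $f\in R(D)$ with $L=D+(f)$, the outgoing slope of $f$ at the point $0$ of $e$ is $m_e$ for each $e$. Any $L$ in a cell is called a representative of it. For a cell $C$ with representative $L$, setting $I_L=\{x\in\Gamma\setminus V: L(x)>0\}$, the dimension of $C$ equals one less than the number of connected components of $\Gamma\setminus I_L$ (a known fact from Haase–Musiker–Yu). The dimension of $|D|$ is the maximum dimension of its cells. *)

theory Defs
  imports Complex_Main
begin

text \<open>A point of a metric graph: a vertex, or an interior point of an edge e, identified
  with a parameter t in the open interval (0, len e) (edge oriented from src e to tgt e).\<close>
datatype ('v, 'e) gpoint = Vert 'v | EPt 'e real

record ('v, 'e) mgraph =
  verts :: "'v set"
  edges :: "'e set"
  src :: "'e \<Rightarrow> 'v"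
  tgt :: "'e \<Rightarrow> 'v"
  len :: "'e \<Rightarrow> real"

definition gpoints :: "('v, 'e) mgraph \<Rightarrow> ('v, 'e) gpoint set" where
  "gpoints G = Vert ` verts G \<union> {EPt e t | e t. e \<in> edges G \<and> 0 < t \<and> t < len G e}"

definition epos :: "('v, 'e) mgraph \<Rightarrow> 'e \<Rightarrow> real \<Rightarrow> ('v, 'e) gpoint" where
  "epos G e u = (if u = 0 then Vert (src G e) else if u = len G e then Vert (tgt G e) else EPt e u)"

text \<open>Connected components of the complement
  of S are the classes of the reflexive-transitive closure.\<close>
definition seg_rel :: "('v, 'e) mgraph \<Rightarrow> ('v, 'e) gpoint set \<Rightarrow> (('v, 'e) gpoint \<times> ('v, 'e) gpoint) set" where
  "seg_rel G S = {(epos G e s, epos G e t) | e s t. e \<in> edges G \<and>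
      0 \<le> s \<and> s \<le> len G e \<and> 0 \<le> t \<and> t \<le> len G e \<and>
      (\<forall>u. min s t \<le> u \<and> u \<le> max s t \<longrightarrow> epos G e u \<notin> S)}"

definition num_components :: "('v, 'e) mgraph \<Rightarrow> ('v, 'e) gpoint set \<Rightarrow> nat" where
  "num_components G S = card ((gpoints G - S) // ((seg_rel G S)\<^sup>*))"

definition metric_graph :: "('v, 'e) mgraph \<Rightarrow> bool" where
  "metric_graph G \<longleftrightarrow> finite (verts G) \<and> finite (edges G) \<and>
     src G ` edges G \<subseteq> verts G \<and> tgt G ` edges G \<subseteq> verts G \<and>
     (\<forall>e\<in>edges G. 0 < len G e) \<and> num_components G {} = 1"

definition two_connected :: "('v, 'e) mgraph \<Rightarrow> bool" where
  "two_connected G \<longleftrightarrow> metric_graph G \<and> (\<forall>x\<in>gpoints G. num_components G {x} = 1)"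

definition supp :: "(('v, 'e) gpoint \<Rightarrow> int) \<Rightarrow> ('v, 'e) gpoint set" where
  "supp D = {x. D x \<noteq> 0}"

definition is_divisor :: "('v, 'e) mgraph \<Rightarrow> (('v, 'e) gpoint \<Rightarrow> int) \<Rightarrow> bool" where
  "is_divisor G D \<longleftrightarrow> finite (supp D) \<and> supp D \<subseteq> gpoints G"

definition div_deg :: "(('v, 'e) gpoint \<Rightarrow> int) \<Rightarrow> int" where
  "div_deg D = (\<Sum>x\<in>supp D. D x)"

definition effective :: "(('v, 'e) gpoint \<Rightarrow> int) \<Rightarrow> bool" where
  "effective D \<longleftrightarrow> (\<forall>x. 0 \<le> D x)"

definition vertex_supported :: "('v, 'e) mgraph \<Rightarrow> (('v, 'e) gpoint \<Rightarrow> int) \<Rightarrow> bool" where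
  "vertex_supported G D \<longleftrightarrow> supp D \<subseteq> Vert ` verts G"

definition edge_fun :: "('v, 'e) mgraph \<Rightarrow> (('v, 'e) gpoint \<Rightarrow> real) \<Rightarrow> 'e \<Rightarrow> real \<Rightarrow> real" where
  "edge_fun G f e = (\<lambda>u. f (epos G e u))"

definition is_rational :: "('v, 'e) mgraph \<Rightarrow> (('v, 'e) gpoint \<Rightarrow> real) \<Rightarrow> bool" where
  "is_rational G f \<longleftrightarrow> (\<forall>e\<in>edges G. \<exists>B. finite B \<and> 0 \<in> B \<and> len G e \<in> B \<and> B \<subseteq> {0..len G e} \<and>
     (\<forall>a\<in>B. \<forall>b\<in>B. a < b \<and> {a<..<b} \<inter> B = {} \<longrightarrow>
        (\<exists>c::int. \<forall>u\<in>{a..b}. edge_fun G f e u = edge_fun G f e a + of_int c * (u - a))))"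

text \<open>Outgoing slope of g at u in direction sigma (1 = increasing parameter, -1 = decreasing).\<close>
definition out_slope :: "(real \<Rightarrow> real) \<Rightarrow> real \<Rightarrow> real \<Rightarrow> int" where
  "out_slope g u \<sigma> = (THE c::int. \<exists>\<epsilon>>0. \<forall>h. 0 < h \<and> h < \<epsilon> \<longrightarrow> g (u + \<sigma> * h) = g u + of_int c * h)"

definition ord :: "('v, 'e) mgraph \<Rightarrow> (('v, 'e) gpoint \<Rightarrow> real) \<Rightarrow> ('v, 'e) gpoint \<Rightarrow> int" where
  "ord G f x = (case x of
      Vert v \<Rightarrow> (\<Sum>e\<in>{e\<in>edges G. src G e = v}. out_slope (edge_fun G f e) 0 1)
              + (\<Sum>e\<in>{e\<in>edges G. tgt G e = v}. out_slope (edge_fun G f e) (len G e) (-1))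
    | EPt e t \<Rightarrow> out_slope (edge_fun G f e) t 1 + out_slope (edge_fun G f e) t (-1))"

definition principal_div :: "('v, 'e) mgraph \<Rightarrow> (('v, 'e) gpoint \<Rightarrow> real) \<Rightarrow> ('v, 'e) gpoint \<Rightarrow> int" where
  "principal_div G f x = (if x \<in> gpoints G then ord G f x else 0)"

definition R_space :: "('v, 'e) mgraph \<Rightarrow> (('v, 'e) gpoint \<Rightarrow> int) \<Rightarrow> (('v, 'e) gpoint \<Rightarrow> real) set" where
  "R_space G D = {f. is_rational G f \<and> effective (\<lambda>x. D x + principal_div G f x)}"

definition lin_sys :: "('v, 'e) mgraph \<Rightarrow> (('v, 'e) gpoint \<Rightarrow> int) \<Rightarrow> (('v, 'e) gpoint \<Rightarrow> int) set" where
  "lin_sys G D = {(\<lambda>x. D x + principal_div G f x) | f. f \<in> R_space G D}"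

text \<open>Cell data: d_v for each vertex, an ordered partition (list of positive integers; empty list
  = no partition) for each edge, and an integer m_e for each edge.\<close>
type_synonym ('v, 'e) cell_data = "('v \<Rightarrow> nat) \<times> ('e \<Rightarrow> nat list) \<times> ('e \<Rightarrow> int)"

definition valid_cell_data :: "('v, 'e) mgraph \<Rightarrow> ('v, 'e) cell_data \<Rightarrow> bool" where
  "valid_cell_data G c = (case c of (dv, pa, m) \<Rightarrow> (\<forall>e\<in>edges G. \<forall>k\<in>set (pa e). 0 < k))"

definition in_cell :: "('v, 'e) mgraph \<Rightarrow> (('v, 'e) gpoint \<Rightarrow> int) \<Rightarrow> ('v, 'e) cell_data \<Rightarrow> (('v, 'e) gpoint \<Rightarrow> int) \<Rightarrow> bool" where
  "in_cell G D c L = (case c of (dv, pa, m) \<Rightarrow>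
     (\<forall>v\<in>verts G. L (Vert v) = int (dv v)) \<and>
     (\<forall>e\<in>edges G. \<exists>xs. length xs = length (pa e) \<and> sorted_wrt (<) xs \<and>
         (\<forall>x\<in>set xs. 0 < x \<and> x < len G e) \<and>
         (\<forall>i<length xs. L (EPt e (xs ! i)) = int (pa e ! i)) \<and>
         (\<forall>t. 0 < t \<and> t < len G e \<and> t \<notin> set xs \<longrightarrow> L (EPt e t) = 0)) \<and>
     (\<forall>f\<in>R_space G D. (\<lambda>x. D x + principal_div G f x) = L \<longrightarrow>
         (\<forall>e\<in>edges G. out_slope (edge_fun G f e) 0 1 = m e)))"

definition cell :: "('v, 'e) mgraph \<Rightarrow> (('v, 'e) gpoint \<Rightarrow> int) \<Rightarrow> ('v, 'e) cell_data \<Rightarrow> (('v, 'e) gpoint \<Rightarrow> int) set" where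
  "cell G D c = {L \<in> lin_sys G D. in_cell G D c L}"

definition I_set :: "('v, 'e) mgraph \<Rightarrow> (('v, 'e) gpoint \<Rightarrow> int) \<Rightarrow> ('v, 'e) gpoint set" where
  "I_set G L = {x \<in> gpoints G. x \<notin> Vert ` verts G \<and> 0 < L x}"

text \<open>Dimension of a cell, via the Haase--Musiker--Yu fact: one less than the number of
  connected components of the graph minus I_L, for a representative L.\<close>
definition cell_dim :: "('v, 'e) mgraph \<Rightarrow> (('v, 'e) gpoint \<Rightarrow> int) \<Rightarrow> ('v, 'e) cell_data \<Rightarrow> int" where
  "cell_dim G D c = int (num_components G (I_set G (SOME L. L \<in> cell G D c))) - 1"

definition linsys_dim :: "('v, 'e) mgraph \<Rightarrow> (('v, 'e) gpoint \<Rightarrow> int) \<Rightarrow> int" where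
  "linsys_dim G D = Max {cell_dim G D c | c. valid_cell_data G c \<and> cell G D c \<noteq> {}}"

end

theory Submission
  imports Defs
begin


lemma out_slope_eq:
  assumes "\<epsilon> > 0" "\<forall>h. 0 < h \<and> h < \<epsilon> \<longrightarrow> g (u + \<sigma> * h) = g u + of_int c * h"
  shows "out_slope g u \<sigma> = c"
  unfolding out_slope_def
proof (rule the_equality)
  show "\<exists>\<epsilon>>0. \<forall>h. 0 < h \<and> h < \<epsilon> \<longrightarrow> g (u + \<sigma> * h) = g u + of_int c * h" using assms by blast
next
  fix c' :: int assume "\<exists>\<epsilon>>0. \<forall>h. 0 < h \<and> h < \<epsilon> \<longrightarrow> g (u + \<sigma> * h) = g u + of_int c' * h"
  then obtain e' where e': "e' > 0" "\<forall>h. 0 < h \<and> h < e' \<longrightarrow> g (u + \<sigma> * h) = g u + of_int c' * h" by blast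
  define h where "h = min \<epsilon> e' / 2"
  have h: "0 < h" "h < \<epsilon>" "h < e'" using assms(1) e'(1) by (auto simp: h_def)
  have "of_int c' * h = of_int c * h" using e'(2) assms(2) h by force
  with h(1) show "c' = c" by simp
qed

definition pw :: "(real \<Rightarrow> real) \<Rightarrow> real \<Rightarrow> real set \<Rightarrow> bool" where
  "pw g l B \<longleftrightarrow> finite B \<and> 0 \<in> B \<and> l \<in> B \<and> B \<subseteq> {0..l} \<and>
     (\<forall>a\<in>B. \<forall>b\<in>B. a < b \<and> {a<..<b} \<inter> B = {} \<longrightarrow>
        (\<exists>c::int. \<forall>u\<in>{a..b}. g u = g a + of_int c * (u - a)))"

lemma is_rational_pw: "is_rational G f \<longleftrightarrow> (\<forall>e\<in>edges G. \<exists>B. pw (edge_fun G f e) (len G e) B)"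
  unfolding is_rational_def pw_def by blast

lemma pw_LIN:
  assumes "pw g l B" "0 \<le> a" "a < b" "b \<le> l" "{a<..<b} \<inter> B = {}"
  shows "\<exists>c::int. \<forall>u\<in>{a..b}. g u = g a + of_int c * (u - a)"
proof -
  have fin: "finite B" and B0: "0 \<in> B" and Bl: "l \<in> B" and Bs: "B \<subseteq> {0..l}"
    using assms(1) by (auto simp: pw_def)
  define a' where "a' = Max {z\<in>B. z \<le> a}"
  define b' where "b' = Min {z\<in>B. b \<le> z}"
  have f1: "finite {z\<in>B. z \<le> a}" "{z\<in>B. z \<le> a} \<noteq> {}" using fin B0 assms(2) by auto
  have f2: "finite {z\<in>B. b \<le> z}" "{z\<in>B. b \<le> z} \<noteq> {}" using fin Bl assms(4) by auto
  have a'B: "a' \<in> B" "a' \<le> a" using Max_in[OF f1] unfolding a'_def by auto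
  have b'B: "b' \<in> B" "b \<le> b'" using Min_in[OF f2] unfolding b'_def by auto
  have disj': "{a'<..<b'} \<inter> B = {}"
  proof (rule ccontr)
    assume "{a'<..<b'} \<inter> B \<noteq> {}"
    then obtain z where z: "z \<in> B" "a' < z" "z < b'" by auto
    show False
    proof (cases "z \<le> a")
      case True
      then have "z \<le> a'" unfolding a'_def using f1 z by (intro Max_ge) auto
      with z show False by simp
    next
      case False
      show False
      proof (cases "b \<le> z")
        case True
        then have "b' \<le> z" unfolding b'_def using f2 z by (intro Min_le) auto
        with z show False by simp
      next
        case False
        with \<open>\<not> z \<le> a\<close> z have "z \<in> {a<..<b} \<inter> B" by auto
        with assms(5) show False by blast
      qed
    qed
  qed
  have lt: "a' < b'" using a'B b'B assms(3) by simp
  have piece: "\<forall>a\<in>B. \<forall>b\<in>B. a < b \<and> {a<..<b} \<inter> B = {} \<longrightarrow>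
        (\<exists>c::int. \<forall>u\<in>{a..b}. g u = g a + of_int c * (u - a))" using assms(1) by (simp add: pw_def)
  from piece[rule_format, OF a'B(1) b'B(1) conjI[OF lt disj']]
  obtain c :: int where c: "\<forall>u\<in>{a'..b'}. g u = g a' + of_int c * (u - a')" by (elim exE)
  have "\<forall>u\<in>{a..b}. g u = g a + of_int c * (u - a)"
  proof
    fix u assume "u \<in> {a..b}"
    then have "u \<in> {a'..b'}" "a \<in> {a'..b'}" using a'B b'B assms(3) by auto
    then have "g u = g a' + of_int c * (u - a')" "g a = g a' + of_int c * (a - a')"
      using c by (meson bspec)+
    then show "g u = g a + of_int c * (u - a)" by (simp add: algebra_simps)
  qed
  then show ?thesis by blast
qed

lemma lin_RD:
  assumes "\<forall>v\<in>{a..b}. g v = g a + of_int c * (v - a)" "a \<le> u" "u < b"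
  shows "out_slope g u 1 = c"
proof (rule out_slope_eq[where \<epsilon> = "b - u"])
  show "b - u > 0" using assms by simp
  show "\<forall>h. 0 < h \<and> h < b - u \<longrightarrow> g (u + 1 * h) = g u + of_int c * h"
  proof (intro allI impI)
    fix h :: real assume "0 < h \<and> h < b - u"
    then have "u + h \<in> {a..b}" "u \<in> {a..b}" using assms(2,3) by auto
    then have "g (u + h) = g a + of_int c * (u + h - a)" "g u = g a + of_int c * (u - a)"
      using assms(1) by (meson bspec)+
    then show "g (u + 1 * h) = g u + of_int c * h" by (simp add: algebra_simps)
  qed
qed

lemma lin_LD:
  assumes "\<forall>v\<in>{a..b}. g v = g a + of_int c * (v - a)" "a < u" "u \<le> b"
  shows "out_slope g u (-1) = - c"
proof (rule out_slope_eq[where \<epsilon> = "u - a"])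
  show "u - a > 0" using assms by simp
  show "\<forall>h. 0 < h \<and> h < u - a \<longrightarrow> g (u + -1 * h) = g u + of_int (-c) * h"
  proof (intro allI impI)
    fix h :: real assume "0 < h \<and> h < u - a"
    then have "u - h \<in> {a..b}" "u \<in> {a..b}" using assms(2,3) by auto
    then have "g (u - h) = g a + of_int c * (u - h - a)" "g u = g a + of_int c * (u - a)"
      using assms(1) by (meson bspec)+
    then show "g (u + -1 * h) = g u + of_int (-c) * h" by (simp add: algebra_simps)
  qed
qed

lemma pw_right:
  assumes "pw g l B" "0 \<le> u" "u < l"
  shows "\<exists>b c. u < b \<and> b \<le> l \<and> (\<forall>v\<in>{u..b}. g v = g u + of_int c * (v - u))"
proof -
  have fin: "finite B" and Bl: "l \<in> B" and Bs: "B \<subseteq> {0..l}" using assms(1) by (auto simp: pw_def)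
  define b where "b = Min {z\<in>B. u < z}"
  have f: "finite {z\<in>B. u < z}" "{z\<in>B. u < z} \<noteq> {}" using fin Bl assms by auto
  have b: "b \<in> B" "u < b" using Min_in[OF f] unfolding b_def by auto
  have disj: "{u<..<b} \<inter> B = {}"
  proof (rule ccontr)
    assume "{u<..<b} \<inter> B \<noteq> {}"
    then obtain z where z: "z \<in> B" "u < z" "z < b" by auto
    then have "b \<le> z" unfolding b_def using f by (intro Min_le) auto
    with z show False by simp
  qed
  have "b \<le> l" using b Bs by auto
  from pw_LIN[OF assms(1) assms(2) b(2) this disj]
  obtain c :: int where c: "\<forall>v\<in>{u..b}. g v = g u + of_int c * (v - u)" by blast
  show ?thesis by (rule exI[where x=b], rule exI[where x=c]) (intro conjI b(2) \<open>b \<le> l\<close> c)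
qed

lemma pw_left:
  assumes "pw g l B" "0 < u" "u \<le> l"
  shows "\<exists>a c. 0 \<le> a \<and> a < u \<and> (\<forall>v\<in>{a..u}. g v = g a + of_int c * (v - a))"
proof -
  have fin: "finite B" and B0: "0 \<in> B" and Bs: "B \<subseteq> {0..l}" using assms(1) by (auto simp: pw_def)
  define a where "a = Max {z\<in>B. z < u}"
  have f: "finite {z\<in>B. z < u}" "{z\<in>B. z < u} \<noteq> {}" using fin B0 assms by auto
  have a: "a \<in> B" "a < u" using Max_in[OF f] unfolding a_def by auto
  have disj: "{a<..<u} \<inter> B = {}"
  proof (rule ccontr)
    assume "{a<..<u} \<inter> B \<noteq> {}"
    then obtain z where z: "z \<in> B" "a < z" "z < u" by auto
    then have "z \<le> a" unfolding a_def using f by (intro Max_ge) auto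
    with z show False by simp
  qed
  have "0 \<le> a" using a Bs by auto
  from pw_LIN[OF assms(1) this a(2) assms(3) disj]
  obtain c :: int where c: "\<forall>v\<in>{a..u}. g v = g a + of_int c * (v - a)" by blast
  show ?thesis by (rule exI[where x=a], rule exI[where x=c]) (intro conjI a(2) \<open>0 \<le> a\<close> c)
qed

lemma pw_nonbreak:
  assumes "pw g l B" "0 < u" "u < l" "u \<notin> B"
  shows "out_slope g u 1 + out_slope g u (-1) = 0"
proof -
  have fin: "finite B" and B0: "0 \<in> B" and Bl: "l \<in> B" and Bs: "B \<subseteq> {0..l}"
    using assms(1) by (auto simp: pw_def)
  define a where "a = Max {z\<in>B. z < u}"
  define b where "b = Min {z\<in>B. u < z}"
  have f: "finite {z\<in>B. z < u}" "{z\<in>B. z < u} \<noteq> {}" using fin B0 assms by auto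
  have a: "a \<in> B" "a < u" using Max_in[OF f] unfolding a_def by auto
  have f2: "finite {z\<in>B. u < z}" "{z\<in>B. u < z} \<noteq> {}" using fin Bl assms by auto
  have b: "b \<in> B" "u < b" using Min_in[OF f2] unfolding b_def by auto
  have disj: "{a<..<b} \<inter> B = {}"
  proof (rule ccontr)
    assume "{a<..<b} \<inter> B \<noteq> {}"
    then obtain z where z: "z \<in> B" "a < z" "z < b" by auto
    show False
    proof (cases "z < u")
      case True
      then have "z \<le> a" unfolding a_def using f z by (intro Max_ge) auto
      with z show False by simp
    next
      case False
      with assms(4) z have "u < z" by (cases "z = u") auto
      then have "b \<le> z" unfolding b_def using f2 z by (intro Min_le) auto
      with z show False by simp
    qed
  qed
  have h0: "0 \<le> a" "b \<le> l" "a < b" using a b Bs by auto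
  from pw_LIN[OF assms(1) h0(1) h0(3) h0(2) disj]
  obtain c where c: "\<forall>v\<in>{a..b}. g v = g a + of_int c * (v - a)" by blast
  show ?thesis using lin_RD[OF c] lin_LD[OF c] a b by simp
qed

lemma pw_telescope_gen:
  assumes pw: "pw g l B" and "finite T"
  shows "\<forall>b. 0 \<le> a \<and> a < b \<and> b \<le> l \<and> T \<subseteq> {a<..<b} \<and> B \<inter> {a<..<b} \<subseteq> T \<longrightarrow>
     (\<Sum>t\<in>T. out_slope g t 1 + out_slope g t (-1)) = - out_slope g b (-1) - out_slope g a 1"
  using assms(2)
proof (induction T rule: finite_linorder_max_induct)
  case empty
  show ?case
  proof (intro allI impI)
    fix b assume h: "0 \<le> a \<and> a < b \<and> b \<le> l \<and> {} \<subseteq> {a<..<b} \<and> B \<inter> {a<..<b} \<subseteq> {}"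
    then obtain c where c: "\<forall>v\<in>{a..b}. g v = g a + of_int c * (v - a)"
      using pw_LIN[OF pw] by (metis Int_commute subset_empty)
    show "(\<Sum>t\<in>{}. out_slope g t 1 + out_slope g t (-1)) = - out_slope g b (-1) - out_slope g a 1"
      using lin_RD[OF c, of a] lin_LD[OF c, of b] h by simp
  qed
next
  case (insert m T)
  show ?case
  proof (intro allI impI)
    fix b assume h: "0 \<le> a \<and> a < b \<and> b \<le> l \<and> insert m T \<subseteq> {a<..<b} \<and> B \<inter> {a<..<b} \<subseteq> insert m T"
    have mT: "m \<notin> T" using insert(2) by auto
    have "B \<inter> {a<..<m} \<subseteq> T" using h insert(2) by auto
    moreover have "T \<subseteq> {a<..<m}" using h insert(2) by auto
    ultimately have IH: "(\<Sum>t\<in>T. out_slope g t 1 + out_slope g t (-1)) = - out_slope g m (-1) - out_slope g a 1"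
      using insert(3) h by auto
    have "{m<..<b} \<inter> B = {}" using h insert(2) by fastforce
    then obtain c where c: "\<forall>v\<in>{m..b}. g v = g m + of_int c * (v - m)"
      using pw_LIN[OF pw, of m b] h by auto
    have "out_slope g m 1 = c" "out_slope g b (-1) = -c" using lin_RD[OF c, of m] lin_LD[OF c, of b] h by auto
    then show "(\<Sum>t\<in>insert m T. out_slope g t 1 + out_slope g t (-1)) = - out_slope g b (-1) - out_slope g a 1"
      using IH insert(1) mT by simp
  qed
qed

lemma pw_telescope:
  assumes pw: "pw g l B" and "0 < l"
  shows "(\<Sum>t\<in>B \<inter> {0<..<l}. out_slope g t 1 + out_slope g t (-1)) = - out_slope g l (-1) - out_slope g 0 1"
proof -
  have "finite B" using pw by (simp add: pw_def)
  then show ?thesis using pw_telescope_gen[OF pw, of "B \<inter> {0<..<l}" 0] assms(2) by auto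
qed



lemma pw_piece:
  assumes "pw g l B" "0 \<le> u" "u \<le> l"
  shows "\<exists>a b c. a \<in> B \<and> b \<in> B \<and> a \<le> u \<and> u \<le> b \<and> (\<forall>v\<in>{a..b}. g v = g a + of_int (c::int) * (v - a))"
proof (cases "u \<in> B")
  case True
  have "\<forall>v\<in>{u..u}. g v = g u + of_int (0::int) * (v - u)" by simp
  then show ?thesis using True by blast
next
  case False
  have fin: "finite B" and B0: "0 \<in> B" and Bl: "l \<in> B" and Bs: "B \<subseteq> {0..l}"
    using assms(1) by (auto simp: pw_def)
  have u0: "0 < u" "u < l" using False B0 Bl assms(2,3) by (auto simp: less_le)
  define a where "a = Max {z\<in>B. z < u}"
  define b where "b = Min {z\<in>B. u < z}"
  have f: "finite {z\<in>B. z < u}" "{z\<in>B. z < u} \<noteq> {}" using fin B0 u0 by auto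
  have a: "a \<in> B" "a < u" using Max_in[OF f] unfolding a_def by auto
  have f2: "finite {z\<in>B. u < z}" "{z\<in>B. u < z} \<noteq> {}" using fin Bl u0 by auto
  have b: "b \<in> B" "u < b" using Min_in[OF f2] unfolding b_def by auto
  have disj: "{a<..<b} \<inter> B = {}"
  proof (rule ccontr)
    assume "{a<..<b} \<inter> B \<noteq> {}"
    then obtain z where z: "z \<in> B" "a < z" "z < b" by auto
    show False
    proof (cases "z < u")
      case True
      then have "z \<le> a" unfolding a_def using f z by (intro Max_ge) auto
      with z show False by simp
    next
      case False
      with \<open>u \<notin> B\<close> z have "u < z" by (cases "z = u") auto
      then have "b \<le> z" unfolding b_def using f2 z by (intro Min_le) auto
      with z show False by simp
    qed
  qed
  have h0: "0 \<le> a" "b \<le> l" "a < b" using a b Bs by auto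
  from pw_LIN[OF assms(1) h0(1) h0(3) h0(2) disj]
  obtain c where c: "\<forall>v\<in>{a..b}. g v = g a + of_int c * (v - a)" by blast
  show ?thesis
    by (rule exI[where x=a], rule exI[where x=b], rule exI[where x=c])
       (intro conjI a(1) b(1) c, use a b in auto)
qed

lemma pw_bound:
  assumes "pw g l B" "0 \<le> u" "u \<le> l" "\<forall>z\<in>B. g z \<le> M"
  shows "g u \<le> M"
proof -
  obtain a b c where ab: "a \<in> B" "b \<in> B" "a \<le> u" "u \<le> b"
    and c: "\<forall>v\<in>{a..b}. g v = g a + of_int (c::int) * (v - a)"
    using pw_piece[OF assms(1-3)] by blast
  have "u \<in> {a..b}" "b \<in> {a..b}" using ab by auto
  then have gu: "g u = g a + of_int c * (u - a)" and gb: "g b = g a + of_int c * (b - a)"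
    using c by (meson bspec)+
  have ga: "g a \<le> M" "g b \<le> M" using assms(4) ab by auto
  show ?thesis
  proof (cases "c \<ge> 0")
    case True
    have "of_int c * (u - a) \<le> of_int c * (b - a)" by (rule mult_left_mono) (use True ab in auto)
    then show ?thesis using gu gb ga by linarith
  next
    case False
    have "of_int c * (u - a) \<le> 0" by (rule mult_nonpos_nonneg) (use False ab in auto)
    then show ?thesis using gu ga by linarith
  qed
qed

lemma pw_all_eq:
  assumes "pw g l B" "0 \<le> u" "u \<le> l" "\<forall>z\<in>B. g z = M"
  shows "g u = M"
proof -
  obtain a b c where ab: "a \<in> B" "b \<in> B" "a \<le> u" "u \<le> b"
    and c: "\<forall>v\<in>{a..b}. g v = g a + of_int (c::int) * (v - a)"
    using pw_piece[OF assms(1-3)] by blast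
  have "u \<in> {a..b}" "b \<in> {a..b}" using ab by auto
  then have gu: "g u = g a + of_int c * (u - a)" and gb: "g b = g a + of_int c * (b - a)"
    using c by (meson bspec)+
  have ga: "g a = M" "g b = M" using assms(4) ab by auto
  show ?thesis
  proof (cases "a = b")
    case True then show ?thesis using ab ga by (metis order_antisym)
  next
    case False
    then have "of_int c * (b - a) = 0" using gb ga by simp
    then have "c = 0" using False by simp
    then show ?thesis using gu ga by simp
  qed
qed

lemma FC0:
  fixes B :: "real set"
  assumes "finite B" "x \<in> B" "y \<in> B" "x < y" "P x" "\<not> P y"
  shows "\<exists>a\<in>B. \<exists>b\<in>B. a < b \<and> {a<..<b} \<inter> B = {} \<and> P a \<and> \<not> P b"
proof -
  define a where "a = Max {z\<in>B. z \<le> y \<and> P z}"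
  have f: "finite {z\<in>B. z \<le> y \<and> P z}" "{z\<in>B. z \<le> y \<and> P z} \<noteq> {}" using assms less_imp_le by auto
  have a: "a \<in> B" "a \<le> y" "P a" using Max_in[OF f] unfolding a_def by auto
  have ay: "a < y" using a assms(6) by (cases "a = y") auto
  define b where "b = Min {z\<in>B. a < z}"
  have f2: "finite {z\<in>B. a < z}" "{z\<in>B. a < z} \<noteq> {}" using assms ay by auto
  have b: "b \<in> B" "a < b" using Min_in[OF f2] unfolding b_def by auto
  have by': "b \<le> y" unfolding b_def using f2 assms(3) ay by (intro Min_le) auto
  have nb: "\<not> P b"
  proof
    assume "P b"
    then have "b \<le> a" unfolding a_def using f b by' by (intro Max_ge) auto
    with b show False by simp
  qed
  have disj: "{a<..<b} \<inter> B = {}"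
  proof (rule ccontr)
    assume "{a<..<b} \<inter> B \<noteq> {}"
    then obtain z where z: "z \<in> B" "a < z" "z < b" by auto
    then have "b \<le> z" unfolding b_def using f2 by (intro Min_le) auto
    with z show False by simp
  qed
  show ?thesis using a b nb disj by blast
qed

lemma FC:
  fixes B :: "real set"
  assumes "finite B" "x \<in> B" "y \<in> B" "P x" "\<not> P y"
  shows "\<exists>a\<in>B. \<exists>b\<in>B. a < b \<and> {a<..<b} \<inter> B = {} \<and> (P a \<noteq> P b)"
proof (cases "x < y")
  case True
  from FC0[OF assms(1-3) True, of P] assms(4,5) show ?thesis by blast
next
  case False
  then have "y < x" using assms(4,5) by (cases "x = y") auto
  from FC0[OF assms(1) assms(3) assms(2) this, of "\<lambda>z. \<not> P z"] assms(4,5) show ?thesis by blast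
qed

lemma AMR:
  assumes "pw g l B" "\<forall>v\<in>{0..l}. g v \<le> M" "g u = M" "0 \<le> u" "u < l"
  shows "out_slope g u 1 \<le> 0"
proof -
  obtain b c where bc: "u < b" "b \<le> l" and c: "\<forall>v\<in>{u..b}. g v = g u + of_int c * (v - u)"
    using pw_right[OF assms(1) assms(4) assms(5)] by blast
  have "b \<in> {u..b}" using bc by auto
  then have "g b = g u + of_int c * (b - u)" using c by (meson bspec)
  moreover have "g b \<le> M" using assms(2) bc assms(4) by auto
  ultimately have "of_int c * (b - u) \<le> 0" using assms(3) by simp
  then have "c \<le> 0" using bc by (simp add: mult_le_0_iff)
  moreover have "out_slope g u 1 = c" using lin_RD[OF c, of u] bc by simp
  ultimately show ?thesis by simp
qed

lemma AML:
  assumes "pw g l B" "\<forall>v\<in>{0..l}. g v \<le> M" "g u = M" "0 < u" "u \<le> l"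
  shows "out_slope g u (-1) \<le> 0"
proof -
  obtain a c where ac: "0 \<le> a" "a < u" and c: "\<forall>v\<in>{a..u}. g v = g a + of_int c * (v - a)"
    using pw_left[OF assms(1) assms(4) assms(5)] by blast
  have "u \<in> {a..u}" using ac by auto
  then have "g u = g a + of_int c * (u - a)" using c by (meson bspec)
  moreover have "g a \<le> M" using assms(2) ac assms(5) by auto
  ultimately have "of_int c * (u - a) \<ge> 0" using assms(3) by simp
  then have "c \<ge> 0" using ac by (simp add: zero_le_mult_iff)
  moreover have "out_slope g u (-1) = -c" using lin_LD[OF c, of u] ac by simp
  ultimately show ?thesis by simp
qed

lemma sum2_nonpos_zero:
  fixes h1 h2 :: "'a \<Rightarrow> int"
  assumes "finite A" "finite A'" "\<forall>x\<in>A. h1 x \<le> 0" "\<forall>x\<in>A'. h2 x \<le> 0"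
    "sum h1 A + sum h2 A' = 0"
  shows "(\<forall>x\<in>A. h1 x = 0) \<and> (\<forall>x\<in>A'. h2 x = 0)"
proof -
  have "sum h1 A \<le> 0" "sum h2 A' \<le> 0" using assms(3,4) by (auto intro: sum_nonpos)
  then have s: "sum (\<lambda>x. - h1 x) A = 0" "sum (\<lambda>x. - h2 x) A' = 0" using assms(5)
    by (simp_all add: sum_negf)
  have "\<forall>x\<in>A. - h1 x = 0" using s(1) assms(1,3) by (subst (asm) sum_nonneg_eq_0_iff) auto
  moreover have "\<forall>x\<in>A'. - h2 x = 0" using s(2) assms(2,4) by (subst (asm) sum_nonneg_eq_0_iff) auto
  ultimately show ?thesis by simp
qed



lemma epos_0: "epos G e 0 = Vert (src G e)" by (simp add: epos_def)
lemma epos_l: "len G e \<noteq> 0 \<Longrightarrow> epos G e (len G e) = Vert (tgt G e)" by (simp add: epos_def)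
lemma epos_int: "0 < u \<Longrightarrow> u < len G e \<Longrightarrow> epos G e u = EPt e u" by (simp add: epos_def)
lemma epos_EPt: "epos G e' u = EPt e t \<Longrightarrow> e' = e \<and> u = t"
  by (simp add: epos_def split: if_splits)

lemma epos_gpoints:
  assumes "metric_graph G" "e \<in> edges G" "0 \<le> u" "u \<le> len G e"
  shows "epos G e u \<in> gpoints G"
proof -
  have "src G e \<in> verts G" "tgt G e \<in> verts G" using assms(1,2) by (auto simp: metric_graph_def)
  then show ?thesis using assms(2-4) unfolding epos_def gpoints_def by auto
qed

lemma gpoints_cases:
  assumes "x \<in> gpoints G"
  obtains v where "x = Vert v" "v \<in> verts G"
  | e t where "x = EPt e t" "e \<in> edges G" "0 < t" "t < len G e"
  using assms unfolding gpoints_def by blast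

lemma ord_EPt: "ord G f (EPt e t) = out_slope (edge_fun G f e) t 1 + out_slope (edge_fun G f e) t (-1)"
  by (simp add: ord_def)

lemma ord_Vert: "ord G f (Vert v) = (\<Sum>e\<in>{e\<in>edges G. src G e = v}. out_slope (edge_fun G f e) 0 1)
              + (\<Sum>e\<in>{e\<in>edges G. tgt G e = v}. out_slope (edge_fun G f e) (len G e) (-1))"
  by (simp add: ord_def)

lemma conn_rel:
  assumes "num_components G S = 1" "x \<in> gpoints G - S" "y \<in> gpoints G - S"
  shows "(x, y) \<in> (seg_rel G S)\<^sup>*"
proof -
  let ?Q = "(gpoints G - S) // (seg_rel G S)\<^sup>*"
  have "card ?Q = 1" using assms(1) by (simp add: num_components_def)
  then obtain K where K: "?Q = {K}" by (rule card_1_singletonE)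
  have "(seg_rel G S)\<^sup>* `` {x} \<in> ?Q" "(seg_rel G S)\<^sup>* `` {y} \<in> ?Q"
    using assms(2,3) by (auto intro: quotientI)
  then have "(seg_rel G S)\<^sup>* `` {x} = (seg_rel G S)\<^sup>* `` {y}" using K by auto
  moreover have "y \<in> (seg_rel G S)\<^sup>* `` {y}" by simp
  ultimately show ?thesis by auto
qed

lemma gpoints_ne_verts:
  assumes "metric_graph G" shows "verts G \<noteq> {}"
proof -
  have "card ((gpoints G - {}) // (seg_rel G {})\<^sup>*) = 1" using assms
    by (simp add: metric_graph_def num_components_def)
  then have "(gpoints G - {}) // (seg_rel G {})\<^sup>* \<noteq> {}" by auto
  then have "gpoints G \<noteq> {}" by (auto simp: quotient_def)
  then obtain x where "x \<in> gpoints G" by auto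
  then show ?thesis
  proof (cases rule: gpoints_cases)
    case (1 v) then show ?thesis by auto
  next
    case (2 e t) then show ?thesis using assms by (auto simp: metric_graph_def)
  qed
qed

lemma vertex_zero:
  assumes mg: "metric_graph G" and Bf: "\<forall>e\<in>edges G. pw (edge_fun G f e) (len G e) (Bf e)"
    and bnd: "\<forall>e\<in>edges G. \<forall>u\<in>{0..len G e}. edge_fun G f e u \<le> M"
    and v: "v \<in> verts G" "f (Vert v) = M" and o: "ord G f (Vert v) = 0"
  shows "(\<forall>e\<in>{e\<in>edges G. src G e = v}. out_slope (edge_fun G f e) 0 1 = 0) \<and>
         (\<forall>e\<in>{e\<in>edges G. tgt G e = v}. out_slope (edge_fun G f e) (len G e) (-1) = 0)"
proof (rule sum2_nonpos_zero)
  have fin: "finite (edges G)" and lp: "\<forall>e\<in>edges G. 0 < len G e" using mg by (auto simp: metric_graph_def)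
  show "finite {e \<in> edges G. src G e = v}" "finite {e \<in> edges G. tgt G e = v}" using fin by auto
  show "sum (\<lambda>e. out_slope (edge_fun G f e) 0 1) {e \<in> edges G. src G e = v} +
    sum (\<lambda>e. out_slope (edge_fun G f e) (len G e) (-1)) {e \<in> edges G. tgt G e = v} = 0"
    using o by (simp add: ord_Vert)
  show "\<forall>e\<in>{e \<in> edges G. src G e = v}. out_slope (edge_fun G f e) 0 1 \<le> 0"
  proof
    fix e assume e: "e \<in> {e \<in> edges G. src G e = v}"
    have "edge_fun G f e 0 = M" using e v by (simp add: edge_fun_def epos_0)
    then show "out_slope (edge_fun G f e) 0 1 \<le> 0"
      using AMR[OF Bf[rule_format, of e]] bnd e lp by auto
  qed
  show "\<forall>e\<in>{e \<in> edges G. tgt G e = v}. out_slope (edge_fun G f e) (len G e) (-1) \<le> 0"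
  proof
    fix e assume e: "e \<in> {e \<in> edges G. tgt G e = v}"
    have "len G e \<noteq> 0" using e lp by force
    then have "edge_fun G f e (len G e) = M" using e v by (simp add: edge_fun_def epos_l)
    then show "out_slope (edge_fun G f e) (len G e) (-1) \<le> 0"
      using AML[OF Bf[rule_format, of e]] bnd e lp by auto
  qed
qed



lemma harmonic_const:
  assumes mg: "metric_graph G" and rat: "is_rational G f" and harm: "\<forall>x\<in>gpoints G. ord G f x = 0"
  shows "\<forall>e\<in>edges G. out_slope (edge_fun G f e) 0 1 = 0"
proof -
  have finE: "finite (edges G)" and finV: "finite (verts G)" and lp: "\<forall>e\<in>edges G. 0 < len G e"
    using mg by (auto simp: metric_graph_def)
  obtain Bf where Bf: "\<forall>e\<in>edges G. pw (edge_fun G f e) (len G e) (Bf e)"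
    using rat unfolding is_rational_pw by metis
  have finB: "\<forall>e\<in>edges G. finite (Bf e)" and B0: "\<forall>e\<in>edges G. 0 \<in> Bf e"
    and Bs: "\<forall>e\<in>edges G. Bf e \<subseteq> {0..len G e}" using Bf by (auto simp: pw_def)
  define Vals where "Vals = (\<lambda>v. f (Vert v)) ` verts G \<union> (\<Union>e\<in>edges G. edge_fun G f e ` Bf e)"
  have finVals: "finite Vals" unfolding Vals_def using finV finE finB by auto
  have neVals: "Vals \<noteq> {}" unfolding Vals_def using gpoints_ne_verts[OF mg] by auto
  define M where "M = Max Vals"
  have bnd: "\<forall>e\<in>edges G. \<forall>u\<in>{0..len G e}. edge_fun G f e u \<le> M"
  proof (intro ballI)
    fix e u assume e: "e \<in> edges G" and u: "u \<in> {0..len G e}"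
    have "\<forall>z\<in>Bf e. edge_fun G f e z \<le> M"
      unfolding M_def using finVals e by (auto intro!: Max_ge simp: Vals_def)
    then show "edge_fun G f e u \<le> M" using pw_bound[OF Bf[rule_format, OF e]] u by auto
  qed
  have bndx: "\<forall>x\<in>gpoints G. f x \<le> M"
  proof
    fix x assume "x \<in> gpoints G"
    then show "f x \<le> M"
    proof (cases rule: gpoints_cases)
      case (1 v) then show ?thesis unfolding M_def using finVals by (auto intro!: Max_ge simp: Vals_def)
    next
      case (2 e t)
      then have "f x = edge_fun G f e t" by (simp add: edge_fun_def epos_int)
      then show ?thesis using bnd 2 by auto
    qed
  qed
  obtain x0 where x0: "x0 \<in> gpoints G" "f x0 = M"
  proof -
    have "M \<in> Vals" unfolding M_def using finVals neVals by (rule Max_in)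
    then consider v where "v \<in> verts G" "M = f (Vert v)"
      | e b where "e \<in> edges G" "b \<in> Bf e" "M = edge_fun G f e b" unfolding Vals_def by blast
    then show ?thesis
    proof cases
      case 1 then show ?thesis using that by (auto simp: gpoints_def)
    next
      case 2
      then have "b \<in> {0..len G e}" using Bs by blast
      then have "epos G e b \<in> gpoints G" using 2 by (intro epos_gpoints[OF mg]) auto
      then show ?thesis using that 2 by (auto simp: edge_fun_def)
    qed
  qed
  have CONS: "edge_fun G f e a = M \<longleftrightarrow> edge_fun G f e b = M"
    if e: "e \<in> edges G" and ab: "a \<in> Bf e" "b \<in> Bf e" "a < b" "{a<..<b} \<inter> Bf e = {}" for e a b
  proof -
    let ?g = "edge_fun G f e"
    have pwe: "pw ?g (len G e) (Bf e)" using Bf e by auto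
    have piece: "\<forall>a\<in>Bf e. \<forall>b\<in>Bf e. a < b \<and> {a<..<b} \<inter> Bf e = {} \<longrightarrow>
        (\<exists>c::int. \<forall>u\<in>{a..b}. ?g u = ?g a + of_int c * (u - a))" using pwe by (simp add: pw_def)
    from piece[rule_format, OF ab(1) ab(2) conjI[OF ab(3) ab(4)]]
    obtain c :: int where c: "\<forall>u\<in>{a..b}. ?g u = ?g a + of_int c * (u - a)" by (elim exE)
    have "b \<in> {a..b}" using ab by auto
    then have gb: "?g b = ?g a + of_int c * (b - a)" using c by (meson bspec)
    have rd: "out_slope ?g a 1 = c" using lin_RD[OF c, of a] ab by simp
    have ld: "out_slope ?g b (-1) = - c" using lin_LD[OF c, of b] ab by simp
    have "a \<in> {0..len G e}" "b \<in> {0..len G e}" using Bs e ab(1,2) by blast+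
    then have ab0: "0 \<le> a" "b \<le> len G e" by auto
    have bndg: "\<forall>v\<in>{0..len G e}. ?g v \<le> M" using bnd e by auto
    have ga: "?g a \<le> M" "?g b \<le> M" using bndg ab0 ab by auto
    show ?thesis
    proof
      assume gaM: "?g a = M"
      have "of_int c * (b - a) \<le> 0" using gb ga gaM by simp
      then have c1: "c \<le> 0" using ab by (simp add: mult_le_0_iff)
      have "c \<ge> 0"
      proof (cases "a = 0")
        case True
        have v: "src G e \<in> verts G" "f (Vert (src G e)) = M"
          using mg e gaM True by (auto simp: metric_graph_def edge_fun_def epos_0)
        have "ord G f (Vert (src G e)) = 0" using harm v(1) by (auto simp: gpoints_def)
        from vertex_zero[OF mg Bf bnd v this] e have "out_slope ?g 0 1 = 0" by auto
        then show ?thesis using rd True by simp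
      next
        case False
        then have a0: "0 < a" "a < len G e" using ab0 ab by auto
        then have ep: "EPt e a \<in> gpoints G" using e by (auto simp: gpoints_def)
        have "out_slope ?g a 1 + out_slope ?g a (-1) = 0" using harm[rule_format, OF ep] by (simp add: ord_EPt)
        moreover have "out_slope ?g a (-1) \<le> 0" using AML[OF pwe bndg gaM] a0 by auto
        ultimately show ?thesis using rd by simp
      qed
      with c1 have "c = 0" by simp
      then show "?g b = M" using gb gaM by simp
    next
      assume gbM: "?g b = M"
      have "of_int c * (b - a) \<ge> 0" using gb ga gbM by simp
      then have c1: "c \<ge> 0" using ab by (simp add: zero_le_mult_iff)
      have "c \<le> 0"
      proof (cases "b = len G e")
        case True
        have ln: "len G e \<noteq> 0" using lp e by force
        have v: "tgt G e \<in> verts G" "f (Vert (tgt G e)) = M"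
          using mg e gbM True ln by (auto simp: metric_graph_def edge_fun_def epos_l)
        have "ord G f (Vert (tgt G e)) = 0" using harm v(1) by (auto simp: gpoints_def)
        from vertex_zero[OF mg Bf bnd v this] e have "out_slope ?g (len G e) (-1) = 0" by auto
        then show ?thesis using ld True by simp
      next
        case False
        then have b0: "0 < b" "b < len G e" using ab0 ab by auto
        then have ep: "EPt e b \<in> gpoints G" using e by (auto simp: gpoints_def)
        have "out_slope ?g b 1 + out_slope ?g b (-1) = 0" using harm[rule_format, OF ep] by (simp add: ord_EPt)
        moreover have "out_slope ?g b 1 \<le> 0" using AMR[OF pwe bndg gbM] b0 by auto
        ultimately show ?thesis using ld by simp
      qed
      with c1 have "c = 0" by simp
      then show "?g a = M" using gb gbM by simp
    qed
  qed
  have PROP: "\<forall>u\<in>{0..len G e}. edge_fun G f e u = M"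
    if e: "e \<in> edges G" and s: "s \<in> {0..len G e}" "edge_fun G f e s = M" for e s
  proof -
    let ?g = "edge_fun G f e"
    have pwe: "pw ?g (len G e) (Bf e)" using Bf e by auto
    have allB: "\<forall>z\<in>Bf e. ?g z = M"
    proof (rule ccontr)
      assume nall: "\<not> (\<forall>z\<in>Bf e. ?g z = M)"
      show False
      proof (cases "\<exists>z\<in>Bf e. ?g z = M")
        case True
        then obtain x where x: "x \<in> Bf e" "?g x = M" by blast
        from nall obtain y where y: "y \<in> Bf e" "\<not> ?g y = M" by blast
        from FC[OF finB[rule_format, OF e] x(1) y(1), of "\<lambda>z. ?g z = M"] x(2) y(2)
        obtain a b where "a \<in> Bf e" "b \<in> Bf e" "a < b" "{a<..<b} \<inter> Bf e = {}" "(?g a = M) \<noteq> (?g b = M)"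
          by blast
        with CONS[OF e] show False by blast
      next
        case False
        define M' where "M' = Max (?g ` Bf e)"
        have "?g ` Bf e \<noteq> {}" using B0 e by auto
        then have "M' \<in> ?g ` Bf e" unfolding M'_def using finB e by (intro Max_in) auto
        then have "M' < M" using False bnd e Bs by fastforce
        moreover have "\<forall>z\<in>Bf e. ?g z \<le> M'" unfolding M'_def using finB e by auto
        then have "?g s \<le> M'" using pw_bound[OF pwe] s by auto
        ultimately show False using s by simp
      qed
    qed
    show ?thesis using pw_all_eq[OF pwe _ _ allB] by auto
  qed
  have allM: "f x = M" if x: "x \<in> gpoints G" for x
  proof -
    have "num_components G {} = 1" using mg by (simp add: metric_graph_def)
    then have "(x0, x) \<in> (seg_rel G {})\<^sup>*" using conn_rel x0(1) x by auto
    then show ?thesis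
    proof (induction rule: rtrancl_induct)
      case base then show ?case using x0 by simp
    next
      case (step y z)
      from step(2) obtain e s t where est: "y = epos G e s" "z = epos G e t" "e \<in> edges G"
        "0 \<le> s" "s \<le> len G e" "0 \<le> t" "t \<le> len G e" unfolding seg_rel_def by blast
      have "f (epos G e s) = M" using step(3) est(1) by simp
      then have "edge_fun G f e s = M" by (simp add: edge_fun_def)
      moreover have "s \<in> {0..len G e}" "t \<in> {0..len G e}" using est by auto
      ultimately have "edge_fun G f e t = M" using PROP[OF est(3)] by blast
      then show ?case using est(2) by (simp add: edge_fun_def)
    qed
  qed
  show ?thesis
  proof
    fix e assume e: "e \<in> edges G"
    have gM: "edge_fun G f e u = M" if "0 \<le> u" "u \<le> len G e" for u
      using allM[OF epos_gpoints[OF mg e that]] by (simp add: edge_fun_def)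
    show "out_slope (edge_fun G f e) 0 1 = 0"
    proof (rule out_slope_eq[where \<epsilon> = "len G e"])
      show "0 < len G e" using lp e by auto
      show "\<forall>h. 0 < h \<and> h < len G e \<longrightarrow> edge_fun G f e (0 + 1 * h) = edge_fun G f e 0 + of_int 0 * h"
        using gM lp e by auto
    qed
  qed
qed



lemma deg_bound:
  fixes G :: "('v, 'e) mgraph" and D :: "('v, 'e) gpoint \<Rightarrow> int"
  assumes mg: "metric_graph G" and vs: "vertex_supported G D"
    and fR: "f \<in> R_space G D"
  shows "finite (I_set G (\<lambda>x. D x + principal_div G f x)) \<and>
         int (card (I_set G (\<lambda>x. D x + principal_div G f x))) \<le> div_deg D"
proof -
  define L where "L = (\<lambda>x. D x + principal_div G f x)"
  have finE: "finite (edges G)" and finV: "finite (verts G)" and lp: "\<forall>e\<in>edges G. 0 < len G e"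
    using mg by (auto simp: metric_graph_def)
  have rat: "is_rational G f" and Leff: "\<forall>x. 0 \<le> L x"
    using fR by (auto simp: R_space_def effective_def L_def)
  obtain Bf where Bf: "\<forall>e\<in>edges G. pw (edge_fun G f e) (len G e) (Bf e)"
    using rat unfolding is_rational_pw by metis
  have finB: "\<forall>e\<in>edges G. finite (Bf e)" using Bf by (auto simp: pw_def)
  have Dz: "D x = 0" if "x \<notin> Vert ` verts G" for x
    using vs that by (auto simp: vertex_supported_def supp_def)
  let ?rd = "\<lambda>e. out_slope (edge_fun G f e) 0 1"
  let ?sl = "\<lambda>e. out_slope (edge_fun G f e) (len G e) (-1)"
  define Sg where "Sg = (SIGMA e:edges G. Bf e \<inter> {0<..<len G e})"
  define P :: "('v, 'e) gpoint set" where "P = (\<lambda>(e,t). EPt e t) ` Sg"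
  have finSg: "finite Sg" unfolding Sg_def using finE finB by (intro finite_SigmaI) auto
  have finP: "finite P" unfolding P_def using finSg by auto
  have injP: "inj_on (\<lambda>(e,t). EPt e t :: ('v, 'e) gpoint) Sg" by (auto simp: inj_on_def)
  have LP: "L (EPt e t) = out_slope (edge_fun G f e) t 1 + out_slope (edge_fun G f e) t (-1)"
    if "e \<in> edges G" "0 < t" "t < len G e" for e t
  proof -
    have "EPt e t \<in> gpoints G" using that by (auto simp: gpoints_def)
    moreover have "EPt e t \<notin> Vert ` verts G" by auto
    ultimately show ?thesis using Dz by (simp add: L_def principal_div_def ord_EPt)
  qed
  have IP: "I_set G L \<subseteq> P"
  proof
    fix x assume xI: "x \<in> I_set G L"
    then have xg: "x \<in> gpoints G" and xv: "x \<notin> Vert ` verts G" and Lpos: "0 < L x"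
      by (auto simp: I_set_def)
    from xg show "x \<in> P"
    proof (cases rule: gpoints_cases)
      case (1 v) then show ?thesis using xv by auto
    next
      case (2 e t)
      have "t \<in> Bf e"
      proof (rule ccontr)
        assume "t \<notin> Bf e"
        then have "L x = 0" using pw_nonbreak[OF Bf[rule_format, OF 2(2)] 2(3) 2(4)] LP[OF 2(2-4)] 2(1)
          by simp
        with Lpos show False by simp
      qed
      then show ?thesis using 2 unfolding P_def Sg_def by auto
    qed
  qed
  have finI: "finite (I_set G L)" using finite_subset[OF IP finP] .
  have "int (card (I_set G L)) = (\<Sum>x\<in>I_set G L. (1::int))" by simp
  also have "\<dots> \<le> (\<Sum>x\<in>I_set G L. L x)" by (rule sum_mono) (auto simp: I_set_def)
  also have "\<dots> \<le> (\<Sum>x\<in>P. L x)" by (rule sum_mono2[OF finP IP]) (use Leff in auto)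
  also have "\<dots> = (\<Sum>(e,t)\<in>Sg. L (EPt e t))"
    unfolding P_def by (subst sum.reindex[OF injP]) (simp add: case_prod_beta)
  also have "\<dots> = (\<Sum>e\<in>edges G. \<Sum>t\<in>Bf e \<inter> {0<..<len G e}. L (EPt e t))"
    unfolding Sg_def by (rule sum.Sigma[symmetric]) (use finE finB in auto)
  also have "\<dots> = (\<Sum>e\<in>edges G. - ?sl e - ?rd e)"
  proof (rule sum.cong[OF refl])
    fix e assume e: "e \<in> edges G"
    have "(\<Sum>t\<in>Bf e \<inter> {0<..<len G e}. L (EPt e t)) =
          (\<Sum>t\<in>Bf e \<inter> {0<..<len G e}. out_slope (edge_fun G f e) t 1 + out_slope (edge_fun G f e) t (-1))"
      by (rule sum.cong[OF refl]) (use LP e in auto)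
    also have "\<dots> = - ?sl e - ?rd e" using pw_telescope[OF Bf[rule_format, OF e]] lp e by auto
    finally show "(\<Sum>t\<in>Bf e \<inter> {0<..<len G e}. L (EPt e t)) = - ?sl e - ?rd e" .
  qed
  also have "\<dots> = - (\<Sum>v\<in>verts G. ord G f (Vert v))"
  proof -
    have s1: "(\<Sum>v\<in>verts G. \<Sum>e\<in>{e\<in>edges G. src G e = v}. ?rd e) = (\<Sum>e\<in>edges G. ?rd e)"
      by (rule sum.group) (use finE finV mg in \<open>auto simp: metric_graph_def\<close>)
    have s2: "(\<Sum>v\<in>verts G. \<Sum>e\<in>{e\<in>edges G. tgt G e = v}. ?sl e) = (\<Sum>e\<in>edges G. ?sl e)"
      by (rule sum.group) (use finE finV mg in \<open>auto simp: metric_graph_def\<close>)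
    have "(\<Sum>v\<in>verts G. ord G f (Vert v)) = (\<Sum>e\<in>edges G. ?rd e) + (\<Sum>e\<in>edges G. ?sl e)"
      unfolding ord_Vert sum.distrib s1 s2 ..
    then show ?thesis by (simp add: sum_subtractf sum_negf)
  qed
  also have "\<dots> \<le> (\<Sum>v\<in>verts G. D (Vert v))"
  proof -
    have "\<forall>v\<in>verts G. - ord G f (Vert v) \<le> D (Vert v)"
    proof
      fix v assume v: "v \<in> verts G"
      then have "Vert v \<in> gpoints G" by (auto simp: gpoints_def)
      then show "- ord G f (Vert v) \<le> D (Vert v)" using Leff[rule_format, of "Vert v"]
        by (simp add: L_def principal_div_def)
    qed
    then have "(\<Sum>v\<in>verts G. - ord G f (Vert v)) \<le> (\<Sum>v\<in>verts G. D (Vert v))" by (simp add: sum_mono)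
    then show ?thesis by (simp add: sum_negf)
  qed
  also have "\<dots> = div_deg D"
  proof -
    have "(\<Sum>v\<in>verts G. D (Vert v)) = (\<Sum>x\<in>Vert ` verts G. D x)"
      by (subst sum.reindex) (auto simp: inj_on_def)
    also have "\<dots> = (\<Sum>x\<in>supp D. D x)"
      by (rule sum.mono_neutral_right) (use finV vs in \<open>auto simp: vertex_supported_def supp_def\<close>)
    finally show ?thesis by (simp add: div_deg_def)
  qed
  finally show ?thesis using finI unfolding L_def by simp
qed



lemma seg_rel_E:
  assumes "(a,b) \<in> seg_rel G S"
  obtains e s t where "a = epos G e s" "b = epos G e t" "e \<in> edges G"
    "0 \<le> s" "s \<le> len G e" "0 \<le> t" "t \<le> len G e"
    "\<forall>u. min s t \<le> u \<and> u \<le> max s t \<longrightarrow> epos G e u \<notin> S"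
  using assms unfolding seg_rel_def by blast

lemma seg_rel_I:
  assumes "e \<in> edges G" "0 \<le> s" "s \<le> len G e" "0 \<le> t" "t \<le> len G e"
    "\<forall>u. min s t \<le> u \<and> u \<le> max s t \<longrightarrow> epos G e u \<notin> S"
  shows "(epos G e s, epos G e t) \<in> seg_rel G S"
  unfolding seg_rel_def using assms by blast

lemma seg_rel_sym: "(a,b) \<in> seg_rel G S \<Longrightarrow> (b,a) \<in> seg_rel G S"
proof -
  assume "(a,b) \<in> seg_rel G S"
  then obtain e s t where h: "a = epos G e s" "b = epos G e t" "e \<in> edges G"
    "0 \<le> s" "s \<le> len G e" "0 \<le> t" "t \<le> len G e"
    "\<forall>u. min s t \<le> u \<and> u \<le> max s t \<longrightarrow> epos G e u \<notin> S" by (rule seg_rel_E)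
  have "\<forall>u. min t s \<le> u \<and> u \<le> max t s \<longrightarrow> epos G e u \<notin> S" using h(8) by (simp add: min.commute max.commute)
  then have "(epos G e t, epos G e s) \<in> seg_rel G S" using h by (intro seg_rel_I) auto
  then show ?thesis using h by simp
qed

lemma sym_seg_rtrancl: "sym ((seg_rel G S)\<^sup>*)"
  by (rule sym_rtrancl) (auto intro: symI seg_rel_sym)

lemma seg_rel_mono: "S \<subseteq> S' \<Longrightarrow> seg_rel G S' \<subseteq> seg_rel G S"
  unfolding seg_rel_def by blast

lemma seg_rel_in:
  assumes mg: "metric_graph G" and "(a,b) \<in> seg_rel G S"
  shows "a \<in> gpoints G - S" "b \<in> gpoints G - S"
proof -
  obtain e s t where h: "a = epos G e s" "b = epos G e t" "e \<in> edges G"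
    "0 \<le> s" "s \<le> len G e" "0 \<le> t" "t \<le> len G e"
    "\<forall>u. min s t \<le> u \<and> u \<le> max s t \<longrightarrow> epos G e u \<notin> S" using assms(2) by (rule seg_rel_E)
  have "epos G e s \<notin> S" "epos G e t \<notin> S" using h(8)[rule_format, of s] h(8)[rule_format, of t] by auto
  then show "a \<in> gpoints G - S" "b \<in> gpoints G - S" using h epos_gpoints[OF mg] by auto
qed

lemma rtrancl_in:
  assumes mg: "metric_graph G" and "(a,b) \<in> (seg_rel G S)\<^sup>*" "a \<in> gpoints G - S"
  shows "b \<in> gpoints G - S"
  using assms(2,3) by (induction rule: rtrancl_induct) (use seg_rel_in[OF mg] in auto)

lemma seg_sub:
  assumes "e \<in> edges G" "0 \<le> s" "s \<le> len G e" "0 \<le> s'" "s' \<le> len G e"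
    "\<forall>u. min s s' \<le> u \<and> u \<le> max s s' \<longrightarrow> epos G e u \<notin> S"
    "min s s' \<le> u0" "u0 \<le> max s s'"
  shows "(epos G e s, epos G e u0) \<in> seg_rel G S"
proof (rule seg_rel_I)
  show "e \<in> edges G" "0 \<le> s" "s \<le> len G e" using assms by auto
  show "0 \<le> u0" "u0 \<le> len G e" using assms by linarith+
  show "\<forall>u. min s u0 \<le> u \<and> u \<le> max s u0 \<longrightarrow> epos G e u \<notin> S"
  proof (intro allI impI)
    fix u assume "min s u0 \<le> u \<and> u \<le> max s u0"
    then have "min s s' \<le> u \<and> u \<le> max s s'" using assms(7,8) by linarith
    then show "epos G e u \<notin> S" using assms(6) by blast
  qed
qed

lemma eq_class:
  assumes "sym (r\<^sup>*)" "(p, y) \<in> r\<^sup>*"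
  shows "r\<^sup>* `` {y} = r\<^sup>* `` {p}"
proof -
  have "(y, p) \<in> r\<^sup>*" using assms by (meson symD)
  then show ?thesis using assms(2) by (auto intro: rtrancl_trans)
qed



lemma comp_step:
  fixes G :: "('v, 'e) mgraph"
  assumes mg: "metric_graph G" and finS: "finite S" and e: "e \<in> edges G"
    and t: "0 < t" "t < len G e" and xS: "EPt e t \<notin> S"
    and finQ: "finite ((gpoints G - S) // (seg_rel G S)\<^sup>*)"
  shows "finite ((gpoints G - insert (EPt e t) S) // (seg_rel G (insert (EPt e t) S))\<^sup>*) \<and>
         card ((gpoints G - insert (EPt e t) S) // (seg_rel G (insert (EPt e t) S))\<^sup>*)
           \<le> card ((gpoints G - S) // (seg_rel G S)\<^sup>*) + 1"
proof -
  define x :: "('v, 'e) gpoint" where "x = EPt e t"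
  define R where "R = seg_rel G S"
  define R' where "R' = seg_rel G (insert x S)"
  define A where "A = gpoints G - S"
  define A' where "A' = gpoints G - insert x S"
  have xA: "x \<in> A" using xS e t unfolding x_def A_def by (auto simp: gpoints_def)
  define U where "U = EPt e -` S"
  have finU: "finite U" unfolding U_def by (rule finite_vimageI[OF finS]) (auto simp: inj_on_def)
  have tU: "t \<notin> U" using xS unfolding U_def by auto
  define D0 where "D0 = (\<lambda>u. \<bar>u - t\<bar>) ` U \<union> {t, len G e - t}"
  have finD0: "finite D0" unfolding D0_def using finU by auto
  have posD0: "\<forall>d\<in>D0. 0 < d" unfolding D0_def using tU t by force
  define \<delta> where "\<delta> = Min D0 / 2"
  have minpos: "0 < Min D0" using finD0 posD0 by (subst Min_gr_iff) (auto simp: D0_def)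
  have dpos: "0 < \<delta>" using minpos by (simp add: \<delta>_def)
  have d_lt: "\<delta> < Min D0" using minpos by (simp add: \<delta>_def)
  have "t \<in> D0" "len G e - t \<in> D0" unfolding D0_def by auto
  then have "Min D0 \<le> t" "Min D0 \<le> len G e - t" using finD0 by (meson Min_le)+
  then have dt: "0 < t - \<delta>" "t + \<delta> < len G e" using d_lt by linarith+
  have avoid: "EPt e v \<notin> S" if "t - \<delta> \<le> v" "v \<le> t + \<delta>" for v
  proof
    assume "EPt e v \<in> S"
    then have "v \<in> U" unfolding U_def by simp
    then have "\<bar>v - t\<bar> \<in> D0" unfolding D0_def by auto
    then have "Min D0 \<le> \<bar>v - t\<bar>" using finD0 by (rule Min_le[rotated])
    with that d_lt show False by linarith
  qed
  have eposI: "epos G e v = EPt e v" if "t - \<delta> \<le> v" "v \<le> t + \<delta>" for v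
    using that dt dpos by (intro epos_int) linarith+
  define pm :: "('v, 'e) gpoint" where "pm = EPt e (t - \<delta>)"
  define pp :: "('v, 'e) gpoint" where "pp = EPt e (t + \<delta>)"
  have pm_e: "pm = epos G e (t - \<delta>)" and pp_e: "pp = epos G e (t + \<delta>)"
    using eposI dpos unfolding pm_def pp_def by auto
  have symR: "sym (R\<^sup>*)" and symR': "sym (R'\<^sup>*)" unfolding R_def R'_def by (rule sym_seg_rtrancl)+
  have R'R: "R' \<subseteq> R" unfolding R_def R'_def by (rule seg_rel_mono) auto
  then have R'R_rt: "R'\<^sup>* \<subseteq> R\<^sup>*" by (rule rtrancl_mono)
  have F4: "z = x \<or> (pm, z) \<in> R'\<^sup>* \<or> (pp, z) \<in> R'\<^sup>*" if "(x, z) \<in> R\<^sup>*" for z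
    using that
  proof (induction rule: rtrancl_induct)
    case base then show ?case by simp
  next
    case (step y z)
    from step(2) obtain e' s s' where h: "y = epos G e' s" "z = epos G e' s'" "e' \<in> edges G"
      "0 \<le> s" "s \<le> len G e'" "0 \<le> s'" "s' \<le> len G e'"
      "\<forall>u. min s s' \<le> u \<and> u \<le> max s s' \<longrightarrow> epos G e' u \<notin> S" unfolding R_def by (rule seg_rel_E)
    show ?case
    proof (cases "\<exists>u. min s s' \<le> u \<and> u \<le> max s s' \<and> epos G e' u = x")
      case True
      then obtain u where u: "min s s' \<le> u" "u \<le> max s s'" "epos G e' u = x" by blast
      from epos_EPt[OF u(3)[unfolded x_def]] have ee: "e' = e" "u = t" by auto
      have tin: "min s s' \<le> t" "t \<le> max s s'" using u ee by auto
      consider "s' = t" | "s' < t" | "t < s'" by linarith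
      then show ?thesis
      proof cases
        case 1
        then have "z = x" using h(2) ee t by (simp add: epos_int x_def)
        then show ?thesis by simp
      next
        case 2
        have "(epos G e (t - \<delta>), epos G e s') \<in> R'"
          unfolding R'_def
        proof (rule seg_rel_I)
          show "e \<in> edges G" "0 \<le> t - \<delta>" "t - \<delta> \<le> len G e" "0 \<le> s'" "s' \<le> len G e"
            using e dt h ee dpos by auto
          show "\<forall>v. min (t - \<delta>) s' \<le> v \<and> v \<le> max (t - \<delta>) s' \<longrightarrow> epos G e v \<notin> insert x S"
          proof (intro allI impI)
            fix v assume v: "min (t - \<delta>) s' \<le> v \<and> v \<le> max (t - \<delta>) s'"
            show "epos G e v \<notin> insert x S"
            proof (cases "t - \<delta> \<le> v")
              case True
              then have "v \<le> t + \<delta>" "v < t" using v 2 dpos by linarith+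
              then show ?thesis using eposI[OF True] avoid[OF True] unfolding x_def by auto
            next
              case False
              then have "min s s' \<le> v" "v \<le> max s s'" "v < t" using v 2 tin dpos by linarith+
              then have "epos G e v \<notin> S" using h(8) ee by auto
              moreover have "epos G e v \<noteq> x" using epos_EPt[of G e v e t] \<open>v < t\<close> unfolding x_def by auto
              ultimately show ?thesis by simp
            qed
          qed
        qed
        then have "(pm, z) \<in> R'" using h(2) ee pm_e by simp
        then show ?thesis by auto
      next
        case 3
        have "(epos G e (t + \<delta>), epos G e s') \<in> R'"
          unfolding R'_def
        proof (rule seg_rel_I)
          show "e \<in> edges G" "0 \<le> t + \<delta>" "t + \<delta> \<le> len G e" "0 \<le> s'" "s' \<le> len G e"
            using e dt h ee dpos t by auto
          show "\<forall>v. min (t + \<delta>) s' \<le> v \<and> v \<le> max (t + \<delta>) s' \<longrightarrow> epos G e v \<notin> insert x S"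
          proof (intro allI impI)
            fix v assume v: "min (t + \<delta>) s' \<le> v \<and> v \<le> max (t + \<delta>) s'"
            show "epos G e v \<notin> insert x S"
            proof (cases "v \<le> t + \<delta>")
              case True
              then have "t - \<delta> \<le> v" "t < v" using v 3 dpos by linarith+
              then show ?thesis using eposI[OF _ True] avoid[OF _ True] unfolding x_def by auto
            next
              case False
              then have "min s s' \<le> v" "v \<le> max s s'" "t < v" using v 3 tin dpos by linarith+
              then have "epos G e v \<notin> S" using h(8) ee by auto
              moreover have "epos G e v \<noteq> x" using epos_EPt[of G e v e t] \<open>t < v\<close> unfolding x_def by auto
              ultimately show ?thesis by simp
            qed
          qed
        qed
        then have "(pp, z) \<in> R'" using h(2) ee pp_e by simp
        then show ?thesis by auto
      qed
    next
      case False
      have "(y, z) \<in> R'" unfolding R'_def h(1,2)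
        by (rule seg_rel_I) (use h False in auto)
      have "y \<noteq> x" using False h by (metis max.cobounded1 min.cobounded1)
      with step(3) have "(pm, y) \<in> R'\<^sup>* \<or> (pp, y) \<in> R'\<^sup>*" by simp
      then show ?thesis using \<open>(y, z) \<in> R'\<close> by (meson rtrancl.rtrancl_into_rtrancl)
    qed
  qed
  have F5: "(y, z) \<in> R'\<^sup>*" if "(y, z) \<in> R\<^sup>*" "(x, y) \<notin> R\<^sup>*" for y z
    using that(1)
  proof (induction rule: rtrancl_induct)
    case base then show ?case by simp
  next
    case (step w z)
    from step(2) obtain e' s s' where h: "w = epos G e' s" "z = epos G e' s'" "e' \<in> edges G"
      "0 \<le> s" "s \<le> len G e'" "0 \<le> s'" "s' \<le> len G e'"
      "\<forall>u. min s s' \<le> u \<and> u \<le> max s s' \<longrightarrow> epos G e' u \<notin> S" unfolding R_def by (rule seg_rel_E)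
    show ?case
    proof (cases "\<exists>u. min s s' \<le> u \<and> u \<le> max s s' \<and> epos G e' u = x")
      case True
      then obtain u where u: "min s s' \<le> u" "u \<le> max s s'" "epos G e' u = x" by blast
      have "(w, x) \<in> R" unfolding R_def h(1) u(3)[symmetric]
        by (rule seg_sub[OF h(3-8) u(1,2)])
      then have "(y, x) \<in> R\<^sup>*" using step(1) by auto
      then have "(x, y) \<in> R\<^sup>*" using symR by (meson symD)
      with that(2) show ?thesis by simp
    next
      case False
      have "(w, z) \<in> R'" unfolding R'_def h(1,2)
        by (rule seg_rel_I) (use h False in auto)
      then show ?thesis using step(3) by auto
    qed
  qed
  define Q where "Q = A // R\<^sup>*"
  define Q' where "Q' = A' // R'\<^sup>*"
  define C where "C = R\<^sup>* `` {x}"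
  have CQ: "C \<in> Q" unfolding C_def Q_def using xA by (rule quotientI)
  have sub: "Q' \<subseteq> (Q - {C}) \<union> {R'\<^sup>* `` {pm}, R'\<^sup>* `` {pp}}"
  proof
    fix K assume "K \<in> Q'"
    then obtain y where y: "y \<in> A'" "K = R'\<^sup>* `` {y}" unfolding Q'_def by (rule quotientE)
    show "K \<in> (Q - {C}) \<union> {R'\<^sup>* `` {pm}, R'\<^sup>* `` {pp}}"
    proof (cases "(x, y) \<in> R\<^sup>*")
      case True
      have "y \<noteq> x" using y(1) unfolding A'_def by auto
      then have "(pm, y) \<in> R'\<^sup>* \<or> (pp, y) \<in> R'\<^sup>*" using F4[OF True] by simp
      then show ?thesis using eq_class[OF symR'] y(2) by auto
    next
      case False
      have "K = R\<^sup>* `` {y}"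
      proof
        show "K \<subseteq> R\<^sup>* `` {y}" using y(2) R'R_rt by auto
        show "R\<^sup>* `` {y} \<subseteq> K" using y(2) F5[OF _ False] by auto
      qed
      moreover have "y \<in> A" using y(1) unfolding A_def A'_def by auto
      then have "R\<^sup>* `` {y} \<in> Q" unfolding Q_def by (rule quotientI)
      moreover have "x \<notin> R\<^sup>* `` {y}"
      proof
        assume "x \<in> R\<^sup>* `` {y}"
        then have "(y, x) \<in> R\<^sup>*" by simp
        then have "(x, y) \<in> R\<^sup>*" using symR by (meson symD)
        with False show False by simp
      qed
      then have "R\<^sup>* `` {y} \<noteq> C" unfolding C_def by auto
      ultimately show ?thesis by auto
    qed
  qed
  have finQ0: "finite Q" using finQ unfolding Q_def A_def R_def .
  have finQ': "finite Q'" using finite_subset[OF sub] finQ0 by auto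
  have "card Q' \<le> card ((Q - {C}) \<union> {R'\<^sup>* `` {pm}, R'\<^sup>* `` {pp}})"
    using sub finQ0 by (intro card_mono) auto
  also have "\<dots> \<le> card (Q - {C}) + card {R'\<^sup>* `` {pm}, R'\<^sup>* `` {pp}}" by (rule card_Un_le)
  also have "\<dots> \<le> card (Q - {C}) + 2" by (simp add: card_insert_le_m1 card_insert_if)
  also have "card (Q - {C}) = card Q - 1" using CQ finQ0 by simp
  also have "card Q \<ge> 1" using CQ finQ0 by (metis card_0_eq empty_iff less_one not_le)
  then have "card Q - 1 + 2 = card Q + 1" by simp
  finally have "card Q' \<le> card Q + 1" by simp
  then show ?thesis using finQ' unfolding Q'_def Q_def A'_def A_def R'_def R_def x_def by simp
qed



lemma comp_ind:
  fixes G :: "('v, 'e) mgraph"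
  assumes mg: "metric_graph G" and finT: "finite T"
    and intT: "\<forall>x\<in>T. \<exists>e t. x = EPt e t \<and> e \<in> edges G \<and> 0 < t \<and> t < len G e"
    and finS: "finite S" and finQ: "finite ((gpoints G - S) // (seg_rel G S)\<^sup>*)"
  shows "finite ((gpoints G - (S \<union> T)) // (seg_rel G (S \<union> T))\<^sup>*) \<and>
         card ((gpoints G - (S \<union> T)) // (seg_rel G (S \<union> T))\<^sup>*)
           \<le> card ((gpoints G - S) // (seg_rel G S)\<^sup>*) + card T"
  using finT intT
proof (induction T rule: finite_induct)
  case empty then show ?case using finQ by simp
next
  case (insert x F)
  have IH: "finite ((gpoints G - (S \<union> F)) // (seg_rel G (S \<union> F))\<^sup>*)"
    "card ((gpoints G - (S \<union> F)) // (seg_rel G (S \<union> F))\<^sup>*)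
           \<le> card ((gpoints G - S) // (seg_rel G S)\<^sup>*) + card F"
    using insert by auto
  have ci: "card (insert x F) = card F + 1" using insert(1,2) by simp
  show ?case
  proof (cases "x \<in> S \<union> F")
    case True
    then have "S \<union> insert x F = S \<union> F" by auto
    then show ?thesis using IH ci by simp
  next
    case False
    obtain e t where x: "x = EPt e t" "e \<in> edges G" "0 < t" "t < len G e" using insert(4) by blast
    have eq: "insert (EPt e t) (S \<union> F) = S \<union> insert x F" using x by auto
    have "finite (S \<union> F)" using finS insert(1) by simp
    from comp_step[OF mg this x(2-4) False[unfolded x(1)] IH(1)] IH(2) ci show ?thesis
      unfolding eq by simp
  qed
qed

lemma finQ_of_one:
  assumes "num_components G S = 1"
  shows "finite ((gpoints G - S) // (seg_rel G S)\<^sup>*)"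
  using assms unfolding num_components_def by (metis card.infinite zero_neq_one)

lemma I_set_int:
  "\<forall>x\<in>I_set G L. \<exists>e t. x = EPt e t \<and> e \<in> edges G \<and> 0 < t \<and> t < len G e"
proof
  fix x assume x: "x \<in> I_set G L"
  then have "x \<in> gpoints G" "x \<notin> Vert ` verts G" by (auto simp: I_set_def)
  then show "\<exists>e t. x = EPt e t \<and> e \<in> edges G \<and> 0 < t \<and> t < len G e"
    by (cases rule: gpoints_cases) auto
qed

lemma cell_bound:
  fixes G :: "('v, 'e) mgraph" and D :: "('v, 'e) gpoint \<Rightarrow> int"
  assumes mg: "metric_graph G" and vs: "vertex_supported G D" and ne: "cell G D c \<noteq> {}"
  shows "-1 \<le> cell_dim G D c \<and> cell_dim G D c \<le> div_deg D \<and>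
         (two_connected G \<and> 1 \<le> div_deg D \<longrightarrow> cell_dim G D c \<le> div_deg D - 1)"
proof -
  define L where "L = (SOME L. L \<in> cell G D c)"
  have "L \<in> cell G D c" unfolding L_def using ne by (metis ex_in_conv someI_ex)
  then have "L \<in> lin_sys G D" by (simp add: cell_def)
  then obtain f where f: "f \<in> R_space G D" "L = (\<lambda>x. D x + principal_div G f x)"
    unfolding lin_sys_def by blast
  define I where "I = I_set G L"
  from deg_bound[OF mg vs f(1)] have finI: "finite I" and cI: "int (card I) \<le> div_deg D"
    unfolding I_def f(2) by auto
  have intI: "\<forall>x\<in>I. \<exists>e t. x = EPt e t \<and> e \<in> edges G \<and> 0 < t \<and> t < len G e"
    unfolding I_def by (rule I_set_int)
  have cd: "cell_dim G D c = int (num_components G I) - 1"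
    unfolding cell_dim_def I_def L_def ..
  have one: "num_components G {} = 1" using mg by (simp add: metric_graph_def)
  from comp_ind[OF mg finI intI, of "{}"] finQ_of_one[OF one]
  have "num_components G I \<le> 1 + card I" using one unfolding num_components_def by simp
  then have b1: "cell_dim G D c \<le> div_deg D" using cd cI by linarith
  have b2: "cell_dim G D c \<le> div_deg D - 1" if tc: "two_connected G" and d1: "1 \<le> div_deg D"
  proof (cases "I = {}")
    case True
    then show ?thesis using cd one d1 by simp
  next
    case False
    then obtain x where x: "x \<in> I" by auto
    have "x \<in> gpoints G" using x unfolding I_def I_set_def by auto
    then have onex: "num_components G {x} = 1" using tc by (simp add: two_connected_def)
    have intI': "\<forall>y\<in>I - {x}. \<exists>e t. y = EPt e t \<and> e \<in> edges G \<and> 0 < t \<and> t < len G e"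
      using intI by auto
    have eqI: "{x} \<union> (I - {x}) = I" using x by auto
    from comp_ind[OF mg _ intI', of "{x}"] finI finQ_of_one[OF onex]
    have "num_components G I \<le> 1 + card (I - {x})" using onex eqI unfolding num_components_def by simp
    moreover have "card (I - {x}) = card I - 1" using x finI by simp
    moreover have "card I \<ge> 1" using x finI by (metis card_0_eq empty_iff less_one not_le)
    ultimately have "num_components G I \<le> card I" by linarith
    then show ?thesis using cd cI by linarith
  qed
  show ?thesis using cd b1 b2 by simp
qed

lemma zero_slope: "out_slope (\<lambda>u. 0) u \<sigma> = 0"
  by (rule out_slope_eq[where \<epsilon> = 1]) auto

lemma cell_exists:
  fixes G :: "('v, 'e) mgraph" and D :: "('v, 'e) gpoint \<Rightarrow> int"
  assumes mg: "metric_graph G" and eff: "effective D" and vs: "vertex_supported G D"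
  shows "\<exists>c. valid_cell_data G c \<and> cell G D c \<noteq> {}"
proof -
  have lp: "\<forall>e\<in>edges G. 0 < len G e" using mg by (simp add: metric_graph_def)
  define f0 :: "('v, 'e) gpoint \<Rightarrow> real" where "f0 = (\<lambda>_. 0)"
  have ef: "edge_fun G f0 e = (\<lambda>u. 0)" for e by (simp add: edge_fun_def f0_def)
  have rat: "is_rational G f0" unfolding is_rational_pw
  proof
    fix e assume e: "e \<in> edges G"
    have "pw (\<lambda>u. 0) (len G e) {0, len G e}"
      unfolding pw_def using lp e by (auto intro: exI[of _ 0])
    then show "\<exists>B. pw (edge_fun G f0 e) (len G e) B" unfolding ef by blast
  qed
  have pd0: "principal_div G f0 = (\<lambda>_. 0)"
    by (rule ext) (simp add: principal_div_def ord_def ef zero_slope split: gpoint.split)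
  have "f0 \<in> R_space G D" using rat eff by (simp add: R_space_def pd0)
  then have DL: "D \<in> lin_sys G D" unfolding lin_sys_def using pd0 by force
  define c :: "('v, 'e) cell_data" where "c = ((\<lambda>v. nat (D (Vert v))), (\<lambda>e. []), (\<lambda>e. 0))"
  have Dz: "D x = 0" if "x \<notin> Vert ` verts G" for x
    using vs that by (auto simp: vertex_supported_def supp_def)
  have "in_cell G D c D"
    unfolding in_cell_def c_def prod.case
  proof (intro conjI)
    show "\<forall>v\<in>verts G. D (Vert v) = int (nat (D (Vert v)))" using eff by (simp add: effective_def)
    show "\<forall>e\<in>edges G. \<exists>xs. length xs = length [] \<and> sorted_wrt (<) xs \<and>
         (\<forall>x\<in>set xs. 0 < x \<and> x < len G e) \<and>
         (\<forall>i<length xs. D (EPt e (xs ! i)) = int ([] ! i)) \<and>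
         (\<forall>t. 0 < t \<and> t < len G e \<and> t \<notin> set xs \<longrightarrow> D (EPt e t) = 0)"
      using Dz by (intro ballI exI[of _ "[]"]) auto
    show "\<forall>f\<in>R_space G D. (\<lambda>x. D x + principal_div G f x) = D \<longrightarrow>
           (\<forall>e\<in>edges G. out_slope (edge_fun G f e) 0 1 = 0)"
    proof (intro ballI impI)
      fix f e assume f: "f \<in> R_space G D" and eq: "(\<lambda>x. D x + principal_div G f x) = D" and e: "e \<in> edges G"
      have "\<forall>x\<in>gpoints G. ord G f x = 0"
      proof
        fix x assume x: "x \<in> gpoints G"
        have "D x + principal_div G f x = D x" using fun_cong[OF eq, of x] by simp
        then show "ord G f x = 0" using x by (simp add: principal_div_def)
      qed
      moreover have "is_rational G f" using f by (simp add: R_space_def)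
      ultimately show "out_slope (edge_fun G f e) 0 1 = 0" using harmonic_const[OF mg] e by blast
    qed
  qed
  then have "D \<in> cell G D c" using DL by (simp add: cell_def)
  moreover have "valid_cell_data G c" by (simp add: valid_cell_data_def c_def)
  ultimately show ?thesis by blast
qed

theorem corollary2p5:
  fixes G :: "('v, 'e) mgraph" and D :: "('v, 'e) gpoint \<Rightarrow> int"
  assumes "metric_graph G" and "is_divisor G D" and "effective D" and "vertex_supported G D"
  shows "linsys_dim G D \<le> div_deg D \<and>
         (two_connected G \<and> 1 \<le> div_deg D \<longrightarrow> linsys_dim G D \<le> div_deg D - 1)"
proof -
  define V where "V = {cell_dim G D c | c. valid_cell_data G c \<and> cell G D c \<noteq> {}}"
  have bnd: "\<forall>v\<in>V. -1 \<le> v \<and> v \<le> div_deg D \<and> (two_connected G \<and> 1 \<le> div_deg D \<longrightarrow> v \<le> div_deg D - 1)"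
    unfolding V_def using cell_bound[OF assms(1) assms(4)] by blast
  have finV: "finite V" using bnd by (intro finite_subset[of V "{-1..div_deg D}"]) auto
  have neV: "V \<noteq> {}" unfolding V_def using cell_exists[OF assms(1) assms(3) assms(4)] by blast
  have ld: "linsys_dim G D = Max V" unfolding linsys_dim_def V_def ..
  show ?thesis unfolding ld using bnd finV neV by (simp add: Max_le_iff)
qed

end
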